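(* Let $\mathcal{X}\subseteq\mathbb{R}^d$ and let $\mathcal{M}$ be a randomized mechanism on weighted data sets that admits a weighted distinguishability profile $\epsilon\colon[1,\infty)\times\mathcal{X}\to\mathbb{R}_{\ge 0}$. Let $q\colon\mathcal{X}\to(0,1]$ be a function and let $S_q$ be the Poisson importance sampler for $q$. Then the mechanism $\widehat{\mathcal{M}}=\mathcal{M}\circ S_q$ (acting on unweighted data sets) admits the distinguishability profile $$\psi(\mathbf{x})=\log\Big(1+q(\mathbf{x})\big(e^{\epsilon(w,\mathbf{x})}-1\big)\Big),\qquad\text{where } w=1/q(\mathbf{x}).$$
   Context: A data set is a finite subset $\mathcal{D}$ of $\mathcal{X}$. Two distributions $P,Q$ on a space $\mathcal{Y}$ are $\epsilon$-indistinguishable ($\epsilon\ge 0$) if $P(Y)\le e^{\epsilon}Q(Y)$ and $Q(Y)\le e^{\epsilon}P(Y)$ for all measurable $Y\subseteq\mathcal{Y}$. A function $\psi\colon\mathcal{X}\to\mathbb{R}_{\ge0}$ is a distinguishability profile of a mechanism $\mathcal{A}$ on data sets if for all data sets $\mathcal{D}\subseteq\mathcal{X}$ and all points $\mathbf{x}\in\mathcal{X}$, the distributions of $\mathcal{A}(\mathcal{D})$ and $\mathcal{A}(\mathcal{D}\cup\{\mathbf{x}\})$ are $\psi(\mathbf{x})$-indistinguishable. A weighted data set is a finite set $\mathcal{S}=\{(w_i,\mathbf{x}_i)\}_{i=1}^n$ with $w_i\ge1$, $\mathbf{x}_i\in\mathcal{X}$. A function $\epsilon\colon[1,\infty)\times\mathcal{X}\to\mathbb{R}_{\ge0}$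 is a weighted distinguishability profile of a mechanism $\mathcal{M}$ on weighted data sets if for all weighted data sets $\mathcal{S}$ and all $(w',\mathbf{x}')$, the distributions of $\mathcal{M}(\mathcal{S})$ and $\mathcal{M}(\mathcal{S}\cup\{(w',\mathbf{x}')\})$ are $\epsilon(w',\mathbf{x}')$-indistinguishable. The Poisson importance sampler for $q$ is the randomized map $S_q(\mathcal{D})=\{(w_i,\mathbf{x}_i)\mid \gamma_i=1\}$ for $\mathcal{D}=\{\mathbf{x}_1,\dots,\mathbf{x}_n\}$, where $w_i=1/q(\mathbf{x}_i)$ and $\gamma_1,\dots,\gamma_n$ are independent Bernoulli variables with parameters $q(\mathbf{x}_i)$. *)

theory Defs
  imports "HOL-Probability.Probability"
begin

definition data_set :: "'x set \<Rightarrow> 'x set \<Rightarrow> bool" where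
  "data_set X D \<longleftrightarrow> finite D \<and> D \<subseteq> X"

definition weighted_data_set :: "'x set \<Rightarrow> (real \<times> 'x) set \<Rightarrow> bool" where
  "weighted_data_set X S \<longleftrightarrow> finite S \<and> (\<forall>(w, x) \<in> S. w \<ge> 1 \<and> x \<in> X)"

definition indist :: "'b measure \<Rightarrow> real \<Rightarrow> 'b measure \<Rightarrow> 'b measure \<Rightarrow> bool" where
  "indist N eps P Q \<longleftrightarrow> eps \<ge> 0 \<and>
     (\<forall>Y \<in> sets N. measure P Y \<le> exp eps * measure Q Y \<and> measure Q Y \<le> exp eps * measure P Y)"

definition dist_profile ::
  "'x set \<Rightarrow> 'b measure \<Rightarrow> ('x set \<Rightarrow> 'b measure) \<Rightarrow> ('x \<Rightarrow> real) \<Rightarrow> bool" where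
  "dist_profile X N A psi \<longleftrightarrow>
     (\<forall>x \<in> X. psi x \<ge> 0) \<and>
     (\<forall>D x. data_set X D \<longrightarrow> x \<in> X \<longrightarrow> indist N (psi x) (A D) (A (insert x D)))"

definition weighted_dist_profile ::
  "'x set \<Rightarrow> 'b measure \<Rightarrow> ((real \<times> 'x) set \<Rightarrow> 'b measure) \<Rightarrow> (real \<Rightarrow> 'x \<Rightarrow> real) \<Rightarrow> bool" where
  "weighted_dist_profile X N M eps \<longleftrightarrow>
     (\<forall>w x. w \<ge> 1 \<longrightarrow> x \<in> X \<longrightarrow> eps w x \<ge> 0) \<and>
     (\<forall>S w' x'. weighted_data_set X S \<longrightarrow> w' \<ge> 1 \<longrightarrow> x' \<in> X \<longrightarrow>
        indist N (eps w' x') (M S) (M (insert (w', x') S)))"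

definition poisson_sampler :: "('x \<Rightarrow> real) \<Rightarrow> 'x set \<Rightarrow> (real \<times> 'x) set pmf" where
  "poisson_sampler q D =
     map_pmf (\<lambda>\<gamma>. {(1 / q x, x) | x. x \<in> D \<and> \<gamma> x})
             (Pi_pmf D False (\<lambda>x. bernoulli_pmf (q x)))"

text \<open>The composed mechanism M \<circ> S_q: the output distribution on N obtained by first sampling
  a weighted data set and then running M on it (i.e. the monadic bind, with output space N).\<close>
definition compose_sampler ::
  "'b measure \<Rightarrow> ((real \<times> 'x) set \<Rightarrow> 'b measure) \<Rightarrow> ('x \<Rightarrow> real) \<Rightarrow> 'x set \<Rightarrow> 'b measure" where
  "compose_sampler N M q D =
     measure_of (space N) (sets N)
       (\<lambda>A. \<integral>\<^sup>+ S. emeasure (M S) A \<partial>measure_pmf (poisson_sampler q D))"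

end

theory Submission
  imports Defs
begin

lemma sampler_support:
  assumes D: "data_set X D" and q: "\<And>x. x \<in> X \<Longrightarrow> 0 < q x \<and> q x \<le> 1"
    and S: "S \<in> set_pmf (poisson_sampler q D)"
  shows "weighted_data_set X S"
proof -
  obtain g where Sg: "S = {(1 / q x, x) | x. x \<in> D \<and> g x}"
    using S unfolding poisson_sampler_def by auto
  have "S \<subseteq> (\<lambda>x. (1 / q x, x)) ` D" using Sg by auto
  moreover have "finite D" using D by (simp add: data_set_def)
  ultimately have "finite S" by (meson finite_imageI finite_subset)
  moreover have "\<forall>(w, x) \<in> S. w \<ge> 1 \<and> x \<in> X"
  proof safe
    fix w x assume "(w, x) \<in> S"
    then have x: "x \<in> D" "w = 1 / q x" using Sg by auto
    then have "x \<in> X" using D by (auto simp: data_set_def)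
    then show "x \<in> X" .
    from q[OF \<open>x \<in> X\<close>] show "w \<ge> 1" using x by simp
  qed
  ultimately show ?thesis by (simp add: weighted_data_set_def)
qed

lemma emeasure_compose:
  assumes mech: "\<And>S. weighted_data_set X S \<Longrightarrow> prob_space (M S) \<and> sets (M S) = sets N"
    and q: "\<And>x. x \<in> X \<Longrightarrow> 0 < q x \<and> q x \<le> 1"
    and D: "data_set X D" and Y: "Y \<in> sets N"
  shows "emeasure (compose_sampler N M q D) Y = (\<integral>\<^sup>+ S. emeasure (M S) Y \<partial>measure_pmf (poisson_sampler q D))"
  unfolding compose_sampler_def
proof (rule emeasure_measure_of_sigma[OF sets.sigma_algebra_axioms _ _ Y])
  show "positive (sets N) (\<lambda>A. \<integral>\<^sup>+ S. emeasure (M S) A \<partial>measure_pmf (poisson_sampler q D))"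
    by (simp add: positive_def)
  show "countably_additive (sets N) (\<lambda>A. \<integral>\<^sup>+ S. emeasure (M S) A \<partial>measure_pmf (poisson_sampler q D))"
    unfolding countably_additive_def
  proof safe
    fix A :: "nat \<Rightarrow> _" assume A: "range A \<subseteq> sets N" "disjoint_family A" "\<Union> (range A) \<in> sets N"
    have "(\<Sum>i. \<integral>\<^sup>+ S. emeasure (M S) (A i) \<partial>measure_pmf (poisson_sampler q D))
        = (\<integral>\<^sup>+ S. (\<Sum>i. emeasure (M S) (A i)) \<partial>measure_pmf (poisson_sampler q D))"
      by (rule nn_integral_suminf[symmetric]) simp
    also have "\<dots> = (\<integral>\<^sup>+ S. emeasure (M S) (\<Union> (range A)) \<partial>measure_pmf (poisson_sampler q D))"
    proof (rule nn_integral_cong_AE, rule AE_pmfI)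
      fix S assume "S \<in> set_pmf (poisson_sampler q D)"
      then have "weighted_data_set X S" using sampler_support[of X D q S] D q by blast
      then have "sets (M S) = sets N" using mech by blast
      then show "(\<Sum>i. emeasure (M S) (A i)) = emeasure (M S) (\<Union> (range A))"
        using A by (intro suminf_emeasure) auto
    qed
    finally show "(\<Sum>i. \<integral>\<^sup>+ S. emeasure (M S) (A i) \<partial>measure_pmf (poisson_sampler q D))
        = (\<integral>\<^sup>+ S. emeasure (M S) (\<Union> (range A)) \<partial>measure_pmf (poisson_sampler q D))" .
  qed
qed

lemma sampler_insert:
  assumes "finite D" "x \<notin> D"
  shows "poisson_sampler q (insert x D) =
    map_pmf (\<lambda>(y, S). if y then insert (1 / q x, x) S else S)
      (pair_pmf (bernoulli_pmf (q x)) (poisson_sampler q D))"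
  unfolding poisson_sampler_def
  using assms
  apply (simp add: Pi_pmf_insert pair_map_pmf2 map_pmf_comp)
  apply (intro map_pmf_cong refl)
  apply (auto split: if_splits)
  done

lemma key:
  fixes a b q e :: real
  assumes "0 \<le> a" "0 \<le> b" "0 < q" "q \<le> 1" "1 \<le> e" "b \<le> e * a" "a \<le> e * b"
  shows "q * b + (1 - q) * a \<le> (1 + q * (e - 1)) * a"
    and "a \<le> (1 + q * (e - 1)) * (q * b + (1 - q) * a)"
proof -
  show "q * b + (1 - q) * a \<le> (1 + q * (e - 1)) * a"
    using assms by (simp add: algebra_simps mult_left_mono)
  have e0: "e > 0" using assms by simp
  have ba: "a / e \<le> b" using assms e0 by (simp add: divide_simps mult.commute)
  have c0: "0 \<le> 1 + q * (e - 1)" using assms by simp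
  have "(1 + q * (e - 1)) * (q * (a / e) + (1 - q) * a) \<le> (1 + q * (e - 1)) * (q * b + (1 - q) * a)"
  proof (rule mult_left_mono[OF _ c0])
    have "q * (a / e) \<le> q * b" using ba assms by (intro mult_left_mono) auto
    then show "q * (a / e) + (1 - q) * a \<le> q * b + (1 - q) * a" by linarith
  qed
  moreover have "(1 + q * (e - 1)) * (q * (a / e) + (1 - q) * a) = a * ((1 - q + q * e) * (1 - q + q / e))"
    using assms by (simp add: field_simps)
  moreover have "(1 - q + q * e) * (1 - q + q / e) \<ge> 1"
  proof -
    have "(1 - q + q * e) * (1 - q + q / e) = (1-q)^2 + q*(1-q)*(e + 1/e) + q^2"
      using e0 by (simp add: algebra_simps power2_eq_square)
    moreover have "e + 1/e \<ge> 2"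
    proof -
      have "(e - 1)^2 / e \<ge> 0" using e0 by simp
      moreover have "(e - 1)^2 / e = e + 1/e - 2" using e0 by (simp add: field_simps power2_eq_square)
      ultimately show ?thesis by simp
    qed
    moreover have "q*(1-q) \<ge> 0" using assms by simp
    ultimately have "(1 - q + q * e) * (1 - q + q / e) \<ge> (1-q)^2 + q*(1-q)*2 + q^2"
      by (metis add_le_cancel_right add_left_mono mult_left_mono)
    moreover have "(1-q)^2 + q*(1-q)*2 + q^2 = 1" by (simp add: algebra_simps power2_eq_square)
    ultimately show ?thesis by simp
  qed
  then have "a \<le> a * ((1 - q + q * e) * (1 - q + q / e))"
    using assms(1) by (metis mult.right_neutral mult_left_mono)
  ultimately show "a \<le> (1 + q * (e - 1)) * (q * b + (1 - q) * a)" by linarith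
qed

lemma nn_bern:
  assumes "0 \<le> p" "p \<le> 1"
  shows "(\<integral>\<^sup>+y. f y \<partial>measure_pmf (bernoulli_pmf p)) = f True * ennreal p + f False * ennreal (1 - p)"
  using assms by (subst nn_integral_measure_pmf_support[of UNIV]) (auto simp: UNIV_bool)

lemma nn_split:
  fixes g :: "_ \<Rightarrow> ennreal"
  assumes "0 \<le> p" "p \<le> 1"
  shows "(\<integral>\<^sup>+ S. g S \<partial>measure_pmf (map_pmf (\<lambda>(y, S). if y then h S else S)
      (pair_pmf (bernoulli_pmf p) P))) = (\<integral>\<^sup>+ S. g (h S) \<partial>measure_pmf P) * ennreal p + (\<integral>\<^sup>+ S. g S \<partial>measure_pmf P) * ennreal (1 - p)"
  apply (simp only: nn_integral_map_pmf nn_integral_pair_pmf')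
  apply (subst nn_bern[OF assms])
  apply simp
  done

theorem theorem2:
  fixes X :: "(real ^ 'd) set"
    and N :: "'b measure"
    and M :: "(real \<times> (real ^ 'd)) set \<Rightarrow> 'b measure"
    and eps :: "real \<Rightarrow> real ^ 'd \<Rightarrow> real"
    and q :: "real ^ 'd \<Rightarrow> real"
  assumes mech: "\<And>S. weighted_data_set X S \<Longrightarrow> prob_space (M S) \<and> sets (M S) = sets N"
    and profile: "weighted_dist_profile X N M eps"
    and q_range: "\<And>x. x \<in> X \<Longrightarrow> 0 < q x \<and> q x \<le> 1"
  shows "dist_profile X N (compose_sampler N M q)
           (\<lambda>x. ln (1 + q x * (exp (eps (1 / q x) x) - 1)))"
proof -
  have epsnn: "\<And>x. x \<in> X \<Longrightarrow> exp (eps (1 / q x) x) \<ge> 1"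
  proof -
    fix x assume x: "x \<in> X"
    then have "1 / q x \<ge> 1" using q_range[OF x] by simp
    then have "eps (1 / q x) x \<ge> 0" using profile x by (simp add: weighted_dist_profile_def)
    then show "exp (eps (1 / q x) x) \<ge> 1" by simp
  qed
  have pos: "\<And>x. x \<in> X \<Longrightarrow> 1 + q x * (exp (eps (1 / q x) x) - 1) \<ge> 1"
    using epsnn q_range by (simp add: less_imp_le)
  have psinn: "\<And>x. x \<in> X \<Longrightarrow> ln (1 + q x * (exp (eps (1 / q x) x) - 1)) \<ge> 0"
    using pos by simp
  have expln: "\<And>x. x \<in> X \<Longrightarrow> exp (ln (1 + q x * (exp (eps (1 / q x) x) - 1))) = 1 + q x * (exp (eps (1 / q x) x) - 1)"
    using pos by (meson exp_ln less_le_trans zero_less_one)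
  show ?thesis
    unfolding dist_profile_def
  proof (intro conjI allI impI ballI)
    fix x assume "x \<in> X" then show "ln (1 + q x * (exp (eps (1 / q x) x) - 1)) \<ge> 0" by (rule psinn)
  next
    fix D x assume D: "data_set X D" and x: "x \<in> X"
    define c where "c = 1 + q x * (exp (eps (1 / q x) x) - 1)"
    define e where "e = exp (eps (1 / q x) x)"
    have c1: "c \<ge> 1" using pos[OF x] c_def by simp
    have expc: "exp (ln c) = c" using expln[OF x] c_def by simp
    show "indist N (ln (1 + q x * (exp (eps (1 / q x) x) - 1))) (compose_sampler N M q D) (compose_sampler N M q (insert x D))"
      unfolding c_def[symmetric] indist_def
    proof (rule conjI[OF _ ballI])
      show "0 \<le> ln c" using c1 by simp
    next
      fix Y assume Y: "Y \<in> sets N"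
      show "measure (compose_sampler N M q D) Y \<le> exp (ln c) * measure (compose_sampler N M q (insert x D)) Y \<and>
            measure (compose_sampler N M q (insert x D)) Y \<le> exp (ln c) * measure (compose_sampler N M q D) Y"
      proof (cases "x \<in> D")
        case True
        then have "insert x D = D" by auto
        moreover have "m \<le> c * m" if "m \<ge> 0" for m :: real using c1 that
          by (metis mult_left_mono mult_1 mult.commute)
        ultimately show ?thesis using expc by simp
      next
        case False
        have finD: "finite D" using D by (simp add: data_set_def)
        have D': "data_set X (insert x D)" using D x by (simp add: data_set_def)
        define P where "P = poisson_sampler q D"
        define w where "w = 1 / q x"
        have qx: "0 < q x" "q x \<le> 1" using q_range[OF x] by auto
        have w1: "w \<ge> 1" using qx by (simp add: w_def)
        define A where "A = (\<integral>\<^sup>+ S. emeasure (M S) Y \<partial>measure_pmf P)"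
        define B where "B = (\<integral>\<^sup>+ S. emeasure (M (insert (w, x) S)) Y \<partial>measure_pmf P)"
        have wS: "weighted_data_set X S" "weighted_data_set X (insert (w, x) S)"
          if "S \<in> set_pmf P" for S
        proof -
          show "weighted_data_set X S" using sampler_support[of X D q S] D q_range that P_def by blast
          then show "weighted_data_set X (insert (w, x) S)" using w1 x by (auto simp: weighted_data_set_def)
        qed
        have em: "emeasure (M T) Y = ennreal (measure (M T) Y)" if "weighted_data_set X T" for T
          using mech[OF that] Y by (simp add: finite_measure.emeasure_eq_measure prob_space.finite_measure)
        have le1: "emeasure (M T) Y \<le> 1" if "weighted_data_set X T" for T
          using mech[OF that] Y by (simp add: prob_space.emeasure_le_1)
        have ind: "measure (M S) Y \<le> e * measure (M (insert (w, x) S)) Y \<and>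
                   measure (M (insert (w, x) S)) Y \<le> e * measure (M S) Y"
          if "S \<in> set_pmf P" for S
        proof -
          have "indist N (eps w x) (M S) (M (insert (w, x) S))"
            using profile wS(1)[OF that] w1 x unfolding weighted_dist_profile_def by blast
          then show ?thesis using Y unfolding indist_def e_def w_def by blast
        qed
        have A1: "A \<le> 1"
        proof -
          have "A \<le> (\<integral>\<^sup>+ S. 1 \<partial>measure_pmf P)" unfolding A_def
            by (rule nn_integral_mono_AE, rule AE_pmfI) (use le1 wS in blast)
          then show ?thesis by simp
        qed
        have B1: "B \<le> 1"
        proof -
          have "B \<le> (\<integral>\<^sup>+ S. 1 \<partial>measure_pmf P)" unfolding B_def
            by (rule nn_integral_mono_AE, rule AE_pmfI) (use le1 wS in blast)
          then show ?thesis by simp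
        qed
        define a where "a = enn2real A"
        define b where "b = enn2real B"
        have Aa: "A = ennreal a"
        proof -
          have "A \<noteq> top" using neq_top_trans[OF ennreal_one_neq_top A1] .
          then show ?thesis unfolding a_def by (simp add: less_top)
        qed
        have Bb: "B = ennreal b"
        proof -
          have "B \<noteq> top" using neq_top_trans[OF ennreal_one_neq_top B1] .
          then show ?thesis unfolding b_def by (simp add: less_top)
        qed
        have a0: "a \<ge> 0" "b \<ge> 0" using a_def b_def by auto
        have e1: "e \<ge> 1" using epsnn[OF x] e_def by simp
        have BA: "B \<le> ennreal e * A"
        proof -
          have "B \<le> (\<integral>\<^sup>+ S. ennreal e * emeasure (M S) Y \<partial>measure_pmf P)" unfolding B_def
          proof (rule nn_integral_mono_AE, rule AE_pmfI)
            fix S assume S: "S \<in> set_pmf P"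
            show "emeasure (M (insert (w, x) S)) Y \<le> ennreal e * emeasure (M S) Y"
              using em[OF wS(1)[OF S]] em[OF wS(2)[OF S]] ind[OF S] e1
              by (simp add: ennreal_mult[symmetric])
          qed
          then show ?thesis unfolding A_def by (simp add: nn_integral_cmult)
        qed
        have AB: "A \<le> ennreal e * B"
        proof -
          have "A \<le> (\<integral>\<^sup>+ S. ennreal e * emeasure (M (insert (w, x) S)) Y \<partial>measure_pmf P)" unfolding A_def
          proof (rule nn_integral_mono_AE, rule AE_pmfI)
            fix S assume S: "S \<in> set_pmf P"
            show "emeasure (M S) Y \<le> ennreal e * emeasure (M (insert (w, x) S)) Y"
              using em[OF wS(1)[OF S]] em[OF wS(2)[OF S]] ind[OF S] e1
              by (simp add: ennreal_mult[symmetric])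
          qed
          then show ?thesis unfolding B_def by (simp add: nn_integral_cmult)
        qed
        have ba: "b \<le> e * a" using BA Aa Bb e1 a0 by (simp add: ennreal_mult[symmetric])
        have ab: "a \<le> e * b" using AB Aa Bb e1 a0 by (simp add: ennreal_mult[symmetric])
        have "emeasure (compose_sampler N M q D) Y = A"
          unfolding A_def P_def by (rule emeasure_compose[OF mech q_range D Y])
        then have m1: "measure (compose_sampler N M q D) Y = a"
          unfolding measure_def using a_def by simp
        have "emeasure (compose_sampler N M q (insert x D)) Y =
            (\<integral>\<^sup>+ S. emeasure (M S) Y \<partial>measure_pmf (poisson_sampler q (insert x D)))"
          by (rule emeasure_compose[OF mech q_range D' Y])
        also have "\<dots> = B * ennreal (q x) + A * ennreal (1 - q x)"
          unfolding sampler_insert[OF finD False] A_def B_def P_def w_def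
          using qx by (intro nn_split) auto
        also have "\<dots> = ennreal (q x * b + (1 - q x) * a)"
        proof -
          have "B * ennreal (q x) = ennreal (q x * b)"
            using Bb a0 qx by (simp add: ennreal_mult mult.commute)
          moreover have "A * ennreal (1 - q x) = ennreal ((1 - q x) * a)"
            using Aa a0 qx by (simp add: ennreal_mult mult.commute)
          moreover have "ennreal (q x * b) + ennreal ((1 - q x) * a) = ennreal (q x * b + (1 - q x) * a)"
            using a0 qx by (intro ennreal_plus[symmetric]) auto
          ultimately show ?thesis by simp
        qed
        finally have E: "emeasure (compose_sampler N M q (insert x D)) Y = ennreal (q x * b + (1 - q x) * a)" .
        have m2: "measure (compose_sampler N M q (insert x D)) Y = q x * b + (1 - q x) * a"
          unfolding measure_def E by (rule enn2real_ennreal) (use a0 qx in auto)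
        have c_e: "c = 1 + q x * (e - 1)" using c_def e_def by simp
        show ?thesis unfolding m1 m2 expc
          using key[OF a0 qx e1 ba ab] unfolding c_e[symmetric] by simp
      qed
    qed
  qed
qed

end
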